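(* Fix $r\in[0,1]$ and consider the recombinator dynamics. Then: (1) (Trait payoff monotonicity) For every state $x\in\Delta(A)$, every dimension $d$, and every pair of traits $a_d,a'_d\in\operatorname{supp}_d(x)$, $$u_x(a_d)>u_x(a'_d)\iff\frac{\dot x(a_d)}{x(a_d)}>\frac{\dot x(a'_d)}{x(a'_d)},$$ where $\dot x(a_d)=\sum_{a_{-d}}\dot x(a_d,a_{-d})$. (2) A state $x$ is stationary if and only if both (a) $u_x(a_d)=u_x$ for every $d\in D$ and every $a_d\in\operatorname{supp}_d(x)$, and (b) $(1-r)\frac{u_x(a)}{u_x}+r\,m_x(a)=1$ for every $a\in\operatorname{supp}(x)$.
   Context: Setting: $D=\{1,\dots,|D|\}$ is a finite set of dimensions with $|D|\ge 2$; each $d\in D$ has a finite nonempty set of traits $A_d$; the set of types is $A=\prod_{d\in D}A_d$, a type being $a=(a_d)_{d\in D}$, and we write $a=(a_d,a_{-d})$ with $a_{-d}\in A_{-d}=\prod_{d'\ne d}A_{d'}$; "$a_d\in a$" means $a_d$ is the $d$-th component of $a$. A payoff function $u:A\times A\to\mathbb{R}_{>0}$ is given. A state is $x\in\Delta(A)$. Define $u_x(a)=\sum_{a'\in A}x(a')u(a,a')$ and $u_x=\sum_{a\in A}x(a)u_x(a)$. Marginals: $x(a_d)=\sum_{a_{-d}}x(a_d,a_{-d})$. Supports: $\operatorname{supp}(x)=\{a:x(a)>0\}$, $\operatorname{supp}_d(x)=\{a_d:x(a_d)>0\}$. For $x(a_d)>0$ the trait payoff is $u_x(a_d)=\frac{1}{x(a_d)}\sum_{a_{-d}}x(a_d,a_{-d})u_x(a_d,a_{-d})$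 (and $x(a_d)u_x(a_d)$ is understood as $\sum_{a_{-d}}x(a_d,a_{-d})u_x(a_d,a_{-d})$). The recombinator dynamics with recombination rate $r\in[0,1]$ is $$\dot x(a)=(1-r)\frac{x(a)u_x(a)}{u_x}+r\prod_{a_d\in a}\frac{x(a_d)u_x(a_d)}{u_x}-x(a),\qquad a\in A.$$ A state is stationary if $\dot x(a)=0$ for all $a$. For $a\in\operatorname{supp}(x)$, the trait-to-type ratio is $m_x(a)=\frac{\prod_{a_d\in a}x(a_d)}{x(a)}$. *)

theory Defs
  imports Complex_Main "HOL-Library.FuncSet"
begin

(* Dimensions: D = {1..n}. Traits of dimension d: At d.
   Types: A = PiE {1..n} At (functions a with a d \<in> At d for d \<in> D, undefined elsewhere).
   A state x : types \<Rightarrow> real, considered on A. *)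

definition types :: "nat \<Rightarrow> (nat \<Rightarrow> 't set) \<Rightarrow> (nat \<Rightarrow> 't) set" where
  "types n At = PiE {1..n} At"

definition is_state :: "nat \<Rightarrow> (nat \<Rightarrow> 't set) \<Rightarrow> ((nat \<Rightarrow> 't) \<Rightarrow> real) \<Rightarrow> bool" where
  "is_state n At x \<longleftrightarrow> (\<forall>a\<in>types n At. x a \<ge> 0) \<and> (\<Sum>a\<in>types n At. x a) = 1"

definition upay where
  "upay n At u x a = (\<Sum>a'\<in>types n At. x a' * u a a')"

definition umean where
  "umean n At u x = (\<Sum>a\<in>types n At. x a * upay n At u x a)"

definition marg where
  "marg n At x d t = (\<Sum>a\<in>{a\<in>types n At. a d = t}. x a)"

text \<open>x(a_d) u_x(a_d), understood as the sum over a_{-d}\<close>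
definition wtrait where
  "wtrait n At u x d t = (\<Sum>a\<in>{a\<in>types n At. a d = t}. x a * upay n At u x a)"

text \<open>trait payoff u_x(a_d) (meaningful when x(a_d) > 0)\<close>
definition utrait where
  "utrait n At u x d t = wtrait n At u x d t / marg n At x d t"

definition xdot where
  "xdot n At u r x a =
     (1 - r) * (x a * upay n At u x a / umean n At u x)
     + r * (\<Prod>d\<in>{1..n}. wtrait n At u x d (a d) / umean n At u x)
     - x a"

definition xdot_trait where
  "xdot_trait n At u r x d t = (\<Sum>a\<in>{a\<in>types n At. a d = t}. xdot n At u r x a)"

definition stationary where
  "stationary n At u r x \<longleftrightarrow> (\<forall>a\<in>types n At. xdot n At u r x a = 0)"

definition mratio where
  "mratio n At x a = (\<Prod>d\<in>{1..n}. marg n At x d (a d)) / x a"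

end

theory Submission imports Defs begin

lemma fiber_eq:
  assumes "d \<in> I"
  shows "{a\<in>PiE I A. a d = t} = PiE I (A(d := A d \<inter> {t}))"
  using assms by (auto simp: PiE_iff extensional_def split: if_splits; metis)

lemma sum_fiber_prod:
  fixes g :: "nat \<Rightarrow> 't \<Rightarrow> real"
  assumes "finite I" "\<forall>i\<in>I. finite (A i)" "d \<in> I"
  shows "(\<Sum>a\<in>{a\<in>PiE I A. a d = t}. \<Prod>i\<in>I. g i (a i))
       = (\<Sum>s\<in>A d \<inter> {t}. g d s) * (\<Prod>i\<in>I-{d}. \<Sum>s\<in>A i. g i s)"
proof -
  have "(\<Sum>a\<in>{a\<in>PiE I A. a d = t}. \<Prod>i\<in>I. g i (a i))
      = (\<Prod>i\<in>I. \<Sum>s\<in>(A(d := A d \<inter> {t})) i. g i s)"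
    unfolding fiber_eq[OF assms(3)]
    by (rule prod_sum_PiE[symmetric]) (use assms in auto)
  also have "\<dots> = (\<Sum>s\<in>(A(d := A d \<inter> {t})) d. g d s) * (\<Prod>i\<in>I-{d}. \<Sum>s\<in>(A(d := A d \<inter> {t})) i. g i s)"
    using assms by (simp add: prod.remove)
  also have "(\<Prod>i\<in>I-{d}. \<Sum>s\<in>(A(d := A d \<inter> {t})) i. g i s) = (\<Prod>i\<in>I-{d}. \<Sum>s\<in>A i. g i s)"
    by (rule prod.cong) auto
  finally show ?thesis by simp
qed

lemma sum_all_prod:
  fixes g :: "nat \<Rightarrow> 't \<Rightarrow> real"
  assumes "finite I" "\<forall>i\<in>I. finite (A i)"
  shows "(\<Sum>a\<in>PiE I A. \<Prod>i\<in>I. g i (a i)) = (\<Prod>i\<in>I. \<Sum>s\<in>A i. g i s)"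
  by (rule prod_sum_PiE[symmetric]) (use assms in auto)


context
  fixes n :: nat and At :: "nat \<Rightarrow> 't set"
    and u :: "(nat \<Rightarrow> 't) \<Rightarrow> (nat \<Rightarrow> 't) \<Rightarrow> real" and r :: real
    and x :: "(nat \<Rightarrow> 't) \<Rightarrow> real"
  assumes fin: "\<forall>d\<in>{1..n}. finite (At d) \<and> At d \<noteq> {}"
    and upos: "\<forall>a\<in>types n At. \<forall>a'\<in>types n At. u a a' > 0"
    and st: "is_state n At x"
begin

lemma finT: "finite (types n At)"
  unfolding types_def using fin by (intro finite_PiE) auto

lemma xnn: "a \<in> types n At \<Longrightarrow> x a \<ge> 0"
  using st unfolding is_state_def by auto

lemma exists_pos: "\<exists>a\<in>types n At. x a > 0"
proof (rule ccontr)
  assume "\<not> ?thesis"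
  then have "\<forall>a\<in>types n At. x a \<le> 0" by auto
  then have "(\<Sum>a\<in>types n At. x a) \<le> 0" by (intro sum_nonpos) auto
  with st show False unfolding is_state_def by auto
qed

lemma upay_pos: "a \<in> types n At \<Longrightarrow> upay n At u x a > 0"
proof -
  assume a: "a \<in> types n At"
  obtain b where b: "b \<in> types n At" "x b > 0" using exists_pos by auto
  show ?thesis unfolding upay_def
  proof (rule sum_pos2[of _ b])
    show "finite (types n At)" by (rule finT)
    show "b \<in> types n At" by (rule b(1))
    show "0 < x b * u a b" using a b upos by auto
    fix i assume "i \<in> types n At"
    then show "0 \<le> x i * u a i" using a upos xnn[of i] by (meson less_imp_le mult_nonneg_nonneg)
  qed
qed

lemma U_pos: "umean n At u x > 0"
proof -
  obtain b where b: "b \<in> types n At" "x b > 0" using exists_pos by auto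
  show ?thesis unfolding umean_def
  proof (rule sum_pos2[of _ b])
    show "finite (types n At)" by (rule finT)
    show "b \<in> types n At" by (rule b(1))
    show "0 < x b * upay n At u x b" using b upay_pos by auto
    fix i assume "i \<in> types n At"
    then show "0 \<le> x i * upay n At u x i" using upay_pos[of i] xnn[of i] by (auto intro!: mult_nonneg_nonneg less_imp_le)
  qed
qed

lemma fiber_empty: "d \<in> {1..n} \<Longrightarrow> t \<notin> At d \<Longrightarrow> {a\<in>types n At. a d = t} = {}"
  unfolding types_def by (auto simp: PiE_iff)

lemma wsum: "d \<in> {1..n} \<Longrightarrow> (\<Sum>s\<in>At d. wtrait n At u x d s) = umean n At u x"
  unfolding wtrait_def umean_def
  using finT fin by (intro sum.group) (auto simp: types_def PiE_iff)

lemma fiber_prod: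
  assumes d: "d \<in> {1..n}"
  shows "(\<Sum>a\<in>{a\<in>types n At. a d = t}. \<Prod>i\<in>{1..n}. wtrait n At u x i (a i) / umean n At u x)
     = wtrait n At u x d t / umean n At u x"
proof -
  let ?g = "\<lambda>i s. wtrait n At u x i s / umean n At u x"
  have "(\<Sum>a\<in>{a\<in>types n At. a d = t}. \<Prod>i\<in>{1..n}. ?g i (a i))
     = (\<Sum>s\<in>At d \<inter> {t}. ?g d s) * (\<Prod>i\<in>{1..n}-{d}. \<Sum>s\<in>At i. ?g i s)"
    unfolding types_def using fin d by (intro sum_fiber_prod) auto
  also have "(\<Prod>i\<in>{1..n}-{d}. \<Sum>s\<in>At i. ?g i s) = 1"
    using U_pos wsum by (intro prod.neutral) (auto simp: sum_divide_distrib[symmetric])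
  also have "(\<Sum>s\<in>At d \<inter> {t}. ?g d s) = ?g d t"
  proof (cases "t \<in> At d")
    case True
    then have "At d \<inter> {t} = {t}" by auto
    then show ?thesis by simp
  next
    case False
    then have "wtrait n At u x d t = 0" unfolding wtrait_def fiber_empty[OF d False] by simp
    with False show ?thesis by auto
  qed
  finally show ?thesis by simp
qed

lemma all_prod:
  "(\<Sum>a\<in>types n At. \<Prod>i\<in>{1..n}. wtrait n At u x i (a i) / umean n At u x) = 1"
proof -
  have "(\<Sum>a\<in>types n At. \<Prod>i\<in>{1..n}. wtrait n At u x i (a i) / umean n At u x)
     = (\<Prod>i\<in>{1..n}. \<Sum>s\<in>At i. wtrait n At u x i s / umean n At u x)"
    unfolding types_def using fin by (intro sum_all_prod) auto
  also have "\<dots> = 1"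
    using U_pos wsum by (intro prod.neutral) (auto simp: sum_divide_distrib[symmetric])
  finally show ?thesis .
qed

lemma xdot_trait_eq:
  assumes d: "d \<in> {1..n}"
  shows "xdot_trait n At u r x d t = wtrait n At u x d t / umean n At u x - marg n At x d t"
proof -
  let ?F = "{a\<in>types n At. a d = t}"
  let ?U = "umean n At u x"
  have "xdot_trait n At u r x d t =
     (1 - r) * (\<Sum>a\<in>?F. x a * upay n At u x a) / ?U
     + r * (\<Sum>a\<in>?F. \<Prod>i\<in>{1..n}. wtrait n At u x i (a i) / ?U)
     - (\<Sum>a\<in>?F. x a)"
    unfolding xdot_trait_def xdot_def
    by (simp add: sum.distrib sum_subtractf sum_distrib_left sum_divide_distrib)
  also have "\<dots> = (1 - r) * wtrait n At u x d t / ?U + r * (wtrait n At u x d t / ?U) - marg n At x d t"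
    using fiber_prod[OF d] unfolding wtrait_def marg_def by simp
  also have "\<dots> = wtrait n At u x d t / ?U - marg n At x d t"
    using U_pos by (simp add: field_simps)
  finally show ?thesis .
qed

lemma xdot_total: "(\<Sum>a\<in>types n At. xdot n At u r x a) = 0"
proof -
  let ?U = "umean n At u x"
  have "(\<Sum>a\<in>types n At. xdot n At u r x a) =
     (1 - r) * (\<Sum>a\<in>types n At. x a * upay n At u x a) / ?U
     + r * (\<Sum>a\<in>types n At. \<Prod>i\<in>{1..n}. wtrait n At u x i (a i) / ?U)
     - (\<Sum>a\<in>types n At. x a)"
    unfolding xdot_def
    by (simp add: sum.distrib sum_subtractf sum_distrib_left sum_divide_distrib)
  also have "\<dots> = (1 - r) + r - 1"
    using all_prod U_pos st unfolding umean_def[symmetric] is_state_def by simp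
  finally show ?thesis by simp
qed

end

lemma marg_nn: fixes x :: "(nat \<Rightarrow> 't) \<Rightarrow> real" assumes "\<forall>a\<in>types n At. x a \<ge> 0" shows "marg n At x d t \<ge> 0"
  unfolding marg_def using assms by (intro sum_nonneg) auto

lemma marg0_w0:
  fixes x :: "(nat \<Rightarrow> 't) \<Rightarrow> real"
  assumes fT: "finite (types n At)" and nn: "\<forall>a\<in>types n At. x a \<ge> 0" and m: "marg n At x d t = 0"
  shows "wtrait n At u x d t = 0"
proof -
  have "\<forall>a\<in>{a\<in>types n At. a d = t}. x a = 0"
  proof -
    have f: "finite {a\<in>types n At. a d = t}" using fT by simp
    show ?thesis using m nn sum_nonneg_eq_0_iff[OF f, of x] unfolding marg_def by auto
  qed
  then show ?thesis unfolding wtrait_def by simp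
qed

theorem proposition2:
  fixes n :: nat and At :: "nat \<Rightarrow> 't set"
    and u :: "(nat \<Rightarrow> 't) \<Rightarrow> (nat \<Rightarrow> 't) \<Rightarrow> real" and r :: real
  assumes n2: "n \<ge> 2"
    and fin: "\<forall>d\<in>{1..n}. finite (At d) \<and> At d \<noteq> {}"
    and upos: "\<forall>a\<in>types n At. \<forall>a'\<in>types n At. u a a' > 0"
    and r: "0 \<le> r" "r \<le> 1"
  shows
    "(\<forall>x. is_state n At x \<longrightarrow>
        (\<forall>d\<in>{1..n}. \<forall>t t'. marg n At x d t > 0 \<longrightarrow> marg n At x d t' > 0 \<longrightarrow>
           (utrait n At u x d t > utrait n At u x d t' \<longleftrightarrow>
            xdot_trait n At u r x d t / marg n At x d t >
            xdot_trait n At u r x d t' / marg n At x d t')))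
   \<and> (\<forall>x. is_state n At x \<longrightarrow>
        (stationary n At u r x \<longleftrightarrow>
           (\<forall>d\<in>{1..n}. \<forall>t. marg n At x d t > 0 \<longrightarrow> utrait n At u x d t = umean n At u x)
         \<and> (\<forall>a\<in>types n At. x a > 0 \<longrightarrow>
              (1 - r) * (upay n At u x a / umean n At u x) + r * mratio n At x a = 1)))"
proof (intro conjI allI impI)
  fix x assume st: "is_state n At x"
  let ?U = "umean n At u x"
  have U: "?U > 0" by (rule U_pos[OF fin upos st])
  have ratio: "xdot_trait n At u r x d t / marg n At x d t = utrait n At u x d t / ?U - 1"
    if "d \<in> {1..n}" "marg n At x d t > 0" for d t
    using xdot_trait_eq[OF fin upos st that(1), of r t] that U
    unfolding utrait_def by (simp add: field_simps)
  show "\<forall>d\<in>{1..n}. \<forall>t t'. marg n At x d t > 0 \<longrightarrow> marg n At x d t' > 0 \<longrightarrow>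
           (utrait n At u x d t > utrait n At u x d t' \<longleftrightarrow>
            xdot_trait n At u r x d t / marg n At x d t >
            xdot_trait n At u r x d t' / marg n At x d t')"
  proof (intro ballI allI impI)
    fix d t t' assume d: "d \<in> {1..n}" and m: "marg n At x d t > 0" "marg n At x d t' > 0"
    show "(utrait n At u x d t > utrait n At u x d t' \<longleftrightarrow>
            xdot_trait n At u r x d t / marg n At x d t >
            xdot_trait n At u r x d t' / marg n At x d t')"
      unfolding ratio[OF d m(1)] ratio[OF d m(2)] using U
      by (simp add: divide_strict_right_mono divide_less_cancel)
  qed
next
  fix x assume st: "is_state n At x"
  let ?U = "umean n At u x"
  let ?T = "types n At"
  have U: "?U > 0" by (rule U_pos[OF fin upos st])
  have fT: "finite ?T" by (rule finT[OF fin upos st])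
  have nn: "\<forall>a\<in>?T. x a \<ge> 0" using st unfolding is_state_def by auto
  have prodeq: "(\<Prod>i\<in>{1..n}. wtrait n At u x i (a i) / ?U) = (\<Prod>i\<in>{1..n}. marg n At x i (a i))"
    if "\<forall>d\<in>{1..n}. \<forall>t. wtrait n At u x d t = ?U * marg n At x d t" for a
    using that U by (intro prod.cong) auto
  have xdot_eq: "xdot n At u r x a = (1 - r) * (x a * upay n At u x a / ?U) + r * (\<Prod>i\<in>{1..n}. marg n At x i (a i)) - x a"
    if "\<forall>d\<in>{1..n}. \<forall>t. wtrait n At u x d t = ?U * marg n At x d t" for a
    unfolding xdot_def prod_dividef[symmetric] using prodeq[OF that] by (simp add: prod_dividef)
  have b_iff: "xdot n At u r x a = 0 \<longleftrightarrow> (1 - r) * (upay n At u x a / ?U) + r * mratio n At x a = 1"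
    if "\<forall>d\<in>{1..n}. \<forall>t. wtrait n At u x d t = ?U * marg n At x d t" "x a > 0" for a
    unfolding xdot_eq[OF that(1)] mratio_def using that(2) U
    by (auto simp: field_simps)
  show "stationary n At u r x \<longleftrightarrow>
           (\<forall>d\<in>{1..n}. \<forall>t. marg n At x d t > 0 \<longrightarrow> utrait n At u x d t = ?U)
         \<and> (\<forall>a\<in>?T. x a > 0 \<longrightarrow>
              (1 - r) * (upay n At u x a / ?U) + r * mratio n At x a = 1)"
  proof
    assume s: "stationary n At u r x"
    have w: "\<forall>d\<in>{1..n}. \<forall>t. wtrait n At u x d t = ?U * marg n At x d t"
    proof (intro ballI allI)
      fix d t assume d: "d \<in> {1..n}"
      have "xdot_trait n At u r x d t = 0"
        using s unfolding xdot_trait_def stationary_def by simp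
      then show "wtrait n At u x d t = ?U * marg n At x d t"
        using xdot_trait_eq[OF fin upos st d, of r t] U by (simp add: field_simps)
    qed
    show "(\<forall>d\<in>{1..n}. \<forall>t. marg n At x d t > 0 \<longrightarrow> utrait n At u x d t = ?U)
         \<and> (\<forall>a\<in>?T. x a > 0 \<longrightarrow>
              (1 - r) * (upay n At u x a / ?U) + r * mratio n At x a = 1)"
    proof
      show "\<forall>d\<in>{1..n}. \<forall>t. marg n At x d t > 0 \<longrightarrow> utrait n At u x d t = ?U"
        using w unfolding utrait_def by simp
      show "\<forall>a\<in>?T. x a > 0 \<longrightarrow> (1 - r) * (upay n At u x a / ?U) + r * mratio n At x a = 1"
        using b_iff[OF w] s unfolding stationary_def by blast
    qed
  next
    assume h: "(\<forall>d\<in>{1..n}. \<forall>t. marg n At x d t > 0 \<longrightarrow> utrait n At u x d t = ?U)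
         \<and> (\<forall>a\<in>?T. x a > 0 \<longrightarrow>
              (1 - r) * (upay n At u x a / ?U) + r * mratio n At x a = 1)"
    have w: "\<forall>d\<in>{1..n}. \<forall>t. wtrait n At u x d t = ?U * marg n At x d t"
    proof (intro ballI allI)
      fix d t assume d: "d \<in> {1..n}"
      show "wtrait n At u x d t = ?U * marg n At x d t"
      proof (cases "marg n At x d t = 0")
        case True
        then show ?thesis using marg0_w0[OF fT nn True] by simp
      next
        case False
        then have "marg n At x d t > 0" using marg_nn[OF nn, of d t] by simp
        then show ?thesis using h d unfolding utrait_def by (auto simp: field_simps)
      qed
    qed
    have nn2: "\<forall>a\<in>?T. xdot n At u r x a \<ge> 0"
    proof
      fix a assume a: "a \<in> ?T"
      show "xdot n At u r x a \<ge> 0"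
      proof (cases "x a > 0")
        case True
        then show ?thesis using b_iff[OF w True] h a by simp
      next
        case False
        then have "x a = 0" using nn a by force
        then show ?thesis unfolding xdot_eq[OF w] using r nn
          by (auto intro!: mult_nonneg_nonneg prod_nonneg marg_nn)
      qed
    qed
    have "\<forall>a\<in>?T. xdot n At u r x a = 0"
      using xdot_total[OF fin upos st, of r] nn2 fT by (subst (asm) sum_nonneg_eq_0_iff) auto
    then show "stationary n At u r x" unfolding stationary_def by simp
  qed
qed

end
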